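(* Let $\mathcal{D}_{\text{SEQ}}$ be a temporal sequence database with support threshold $\sigma$ and confidence threshold $\delta$. Let $N_{k-1}=(E_1,\dots,E_{k-1})$ be a frequent $(k-1)$-event combination and $E_k$ a frequent single event, and let $N_k=N_{k-1}\cup E_k$. Then $N_k$ can form frequent $k$-event temporal patterns only if for every $E_i\in N_{k-1}$ there exists $r\in\{\text{Follows},\text{Contains},\text{Overlaps}\}$ such that $r(E_i,E_k)$ is a frequent temporal relation.
   Context: A temporal event is $E=(\omega,T)$ (symbol and set of intervals), with instances $(\omega,[t_s,t_e])$. $\mathcal{D}_{\text{SEQ}}$ is a finite collection of temporal sequences (lists of instances ordered by start time). A $k$-event temporal pattern over events $E_1,\dots,E_k$ is a list of the $\tfrac12k(k-1)$ triples $(r_{ij},E_i,E_j)$, $r_{ij}\in\{\text{Follows},\text{Contains},\text{Overlaps}\}$. A sequence supports a pattern iff it has at least two instances and each triple's relation holds between some instances of the two events in it. Supports count sequences: $\textit{supp}$ of an event (group) is the number of sequences containing an instance of each event, $\textit{supp}(P)$ the number of sequences supporting $P$; $\textit{conf}(P)=\textit{supp}(P)/\max_{E_k\in P}\textit{supp}(E_k)$. An event, event combination, relation (viewed as a 2-event pattern $(r,E_i,E_k)$) or pattern is frequent if its support is at least $\sigma$ (and, for combinations/patterns, its confidence is at least $\delta$). *)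

theory Defs
  imports Main "HOL.Real"
begin

datatype trel = Follows | Contains | Overlaps

type_synonym 'a inst = "'a \<times> (real \<times> real)"
type_synonym 'a tseq = "'a inst list"
type_synonym 'a tdb = "'a tseq list"

fun tholds :: "trel \<Rightarrow> real \<times> real \<Rightarrow> real \<times> real \<Rightarrow> bool" where
  "tholds Follows (ts1, te1) (ts2, te2) = (te1 \<le> ts2)"
| "tholds Contains (ts1, te1) (ts2, te2) = (ts1 \<le> ts2 \<and> te2 \<le> te1)"
| "tholds Overlaps (ts1, te1) (ts2, te2) = (ts1 < ts2 \<and> ts2 < te1 \<and> te1 < te2)"

definition valid_seq :: "'a tseq \<Rightarrow> bool" where
  "valid_seq S \<longleftrightarrow> (\<forall>x\<in>set S. fst (snd x) \<le> snd (snd x)) \<and> sorted (map (\<lambda>x. fst (snd x)) S)"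

definition valid_db :: "'a tdb \<Rightarrow> bool" where
  "valid_db D \<longleftrightarrow> (\<forall>S\<in>set D. valid_seq S)"

definition occurs :: "'a \<Rightarrow> 'a tseq \<Rightarrow> bool" where
  "occurs e S \<longleftrightarrow> (\<exists>x\<in>set S. fst x = e)"

definition rel_holds_in :: "'a tseq \<Rightarrow> trel \<Rightarrow> 'a \<Rightarrow> 'a \<Rightarrow> bool" where
  "rel_holds_in S r a b \<longleftrightarrow>
     (\<exists>x\<in>set S. \<exists>y\<in>set S. fst x = a \<and> fst y = b \<and> tholds r (snd x) (snd y))"

type_synonym 'a pattern = "(trel \<times> 'a \<times> 'a) list"

definition pattern_over :: "'a list \<Rightarrow> (nat \<Rightarrow> nat \<Rightarrow> trel) \<Rightarrow> 'a pattern" where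
  "pattern_over es R = [(R i j, es ! i, es ! j). j \<leftarrow> [0..<length es], i \<leftarrow> [0..<j]]"

definition supports :: "'a tseq \<Rightarrow> 'a pattern \<Rightarrow> bool" where
  "supports S P \<longleftrightarrow> 2 \<le> length S \<and> (\<forall>(r, a, b)\<in>set P. rel_holds_in S r a b)"

definition pat_events :: "'a pattern \<Rightarrow> 'a set" where
  "pat_events P = (\<Union>(r, a, b)\<in>set P. {a, b})"

definition supp_ev :: "'a tdb \<Rightarrow> 'a \<Rightarrow> nat" where
  "supp_ev D e = length (filter (occurs e) D)"

definition supp_comb :: "'a tdb \<Rightarrow> 'a list \<Rightarrow> nat" where
  "supp_comb D es = length (filter (\<lambda>S. \<forall>e\<in>set es. occurs e S) D)"

definition conf_comb :: "'a tdb \<Rightarrow> 'a list \<Rightarrow> real" where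
  "conf_comb D es = real (supp_comb D es) / real (Max (supp_ev D ` set es))"

definition supp_pat :: "'a tdb \<Rightarrow> 'a pattern \<Rightarrow> nat" where
  "supp_pat D P = length (filter (\<lambda>S. supports S P) D)"

definition conf_pat :: "'a tdb \<Rightarrow> 'a pattern \<Rightarrow> real" where
  "conf_pat D P = real (supp_pat D P) / real (Max (supp_ev D ` pat_events P))"

definition frequent_event :: "'a tdb \<Rightarrow> nat \<Rightarrow> 'a \<Rightarrow> bool" where
  "frequent_event D \<sigma> e \<longleftrightarrow> \<sigma> \<le> supp_ev D e"

definition frequent_comb :: "'a tdb \<Rightarrow> nat \<Rightarrow> real \<Rightarrow> 'a list \<Rightarrow> bool" where
  "frequent_comb D \<sigma> \<delta> es \<longleftrightarrow> \<sigma> \<le> supp_comb D es \<and> \<delta> \<le> conf_comb D es"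

definition frequent_pat :: "'a tdb \<Rightarrow> nat \<Rightarrow> real \<Rightarrow> 'a pattern \<Rightarrow> bool" where
  "frequent_pat D \<sigma> \<delta> P \<longleftrightarrow> \<sigma> \<le> supp_pat D P \<and> \<delta> \<le> conf_pat D P"

definition frequent_rel :: "'a tdb \<Rightarrow> nat \<Rightarrow> real \<Rightarrow> trel \<Rightarrow> 'a \<Rightarrow> 'a \<Rightarrow> bool" where
  "frequent_rel D \<sigma> \<delta> r a b \<longleftrightarrow> frequent_pat D \<sigma> \<delta> [(r, a, b)]"

end

theory Submission
  imports Defs
begin

lemma length_filter_mono:
  assumes "\<And>x. P x \<Longrightarrow> Q x"
  shows "length (filter P xs) \<le> length (filter Q xs)"
  using assms by (induction xs) auto

lemma trip_in:
  assumes "i < length Ns"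
  shows "(R i (length Ns), Ns ! i, Ek) \<in> set (pattern_over (Ns @ [Ek]) R)"
proof -
  have "(R i (length Ns), (Ns@[Ek]) ! i, (Ns@[Ek]) ! length Ns) \<in> set (pattern_over (Ns @ [Ek]) R)"
    unfolding pattern_over_def using assms by (auto intro!: bexI[of _ "length Ns"])
  thus ?thesis using assms by (simp add: nth_append)
qed

lemma supp_mono:
  assumes "(r, a, b) \<in> set P"
  shows "supp_pat D P \<le> supp_pat D [(r, a, b)]"
  unfolding supp_pat_def
proof (rule length_filter_mono)
  fix S assume "supports S P"
  thus "supports S [(r, a, b)]" using assms unfolding supports_def by auto
qed

lemma supp_le_ev:
  "supp_pat D [(r, a, b)] \<le> supp_ev D a"
  unfolding supp_pat_def supp_ev_def
  by (rule length_filter_mono) (auto simp: supports_def rel_holds_in_def occurs_def)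

lemma finite_pe: "finite (pat_events P)"
  unfolding pat_events_def by auto

lemma main:
  assumes "(r, a, b) \<in> set P" and "frequent_pat D \<sigma> \<delta> P"
  shows "frequent_rel D \<sigma> \<delta> r a b"
proof -
  let ?s1 = "supp_pat D [(r, a, b)]" and ?s = "supp_pat D P"
  let ?m1 = "Max (supp_ev D ` pat_events [(r, a, b)])" and ?m = "Max (supp_ev D ` pat_events P)"
  have s: "?s \<le> ?s1" by (rule supp_mono[OF assms(1)])
  have pe1: "pat_events [(r, a, b)] = {a, b}" by (simp add: pat_events_def)
  have sub: "{a,b} \<subseteq> pat_events P" using assms(1) unfolding pat_events_def by blast
  have m: "?m1 \<le> ?m" unfolding pe1
    by (rule Max_mono) (use sub finite_pe in auto)
  have a_le: "supp_ev D a \<le> ?m1" unfolding pe1 by simp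
  have conf: "\<delta> \<le> real ?s / real ?m" using assms(2) by (simp add: frequent_pat_def conf_pat_def)
  have "\<delta> \<le> real ?s1 / real ?m1"
  proof (cases "?m1 = 0")
    case True
    then have "?s1 = 0" using a_le supp_le_ev[of D r a b] by simp
    then have "?s = 0" using s by simp
    then show ?thesis using conf True by simp
  next
    case False
    have "real ?s / real ?m \<le> real ?s1 / real ?m"
      using s by (simp add: divide_right_mono)
    also have "\<dots> \<le> real ?s1 / real ?m1"
      using False m by (intro divide_left_mono) auto
    finally show ?thesis using conf by simp
  qed
  moreover have "\<sigma> \<le> ?s1" using s assms(2) by (simp add: frequent_pat_def)
  ultimately show ?thesis unfolding frequent_rel_def frequent_pat_def conf_pat_def by simp
qed

theorem lemma5:
  fixes D :: "'a tdb" and \<sigma> :: nat and \<delta> :: real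
    and Ns :: "'a list" and Ek :: 'a and R :: "nat \<Rightarrow> nat \<Rightarrow> trel"
  assumes "valid_db D"
    and "distinct (Ns @ [Ek])"
    and "frequent_comb D \<sigma> \<delta> Ns"
    and "frequent_event D \<sigma> Ek"
    and "frequent_pat D \<sigma> \<delta> (pattern_over (Ns @ [Ek]) R)"
  shows "\<forall>Ei\<in>set Ns. \<exists>r. frequent_rel D \<sigma> \<delta> r Ei Ek"
proof
  fix Ei assume "Ei \<in> set Ns"
  then obtain i where "i < length Ns" "Ei = Ns ! i" by (auto simp: in_set_conv_nth)
  then show "\<exists>r. frequent_rel D \<sigma> \<delta> r Ei Ek"
    using main[OF trip_in assms(5)] by blast
qed

end
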